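(* For each $n\ge0$ let $w(n)$ be the least integer $m\ge 0$ such that $a(m)\ge n$. If $n\ge 2$ and $k$ is such that $F_k\le n<F_{k+1}$, then $w(n)=F_k+1$.
   Context: Let $(F_n)_{n\ge 0}$ be the Fibonacci numbers: $F_0=0$, $F_1=1$, $F_n=F_{n-1}+F_{n-2}$ for $n\ge 2$. Define $(a(n))_{n\ge 0}$ (OEIS A105774) by $a(0)=0$, $a(1)=1$, and for $n\ge 2$, $a(n)=F_{j+1}-a(n-F_j)$, where $j\ge 2$ is the unique index with $F_j<n\le F_{j+1}$. *)

theory Defs
  imports "HOL-Number_Theory.Fib"
begin

definition fib_idx :: "nat \<Rightarrow> nat" where
  "fib_idx n = (THE j. 2 \<le> j \<and> fib j < n \<and> n \<le> fib (Suc j))"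

text \<open>OEIS A105774. The guard 0 < fib (fib_idx n) always holds for n >= 2
  (since fib_idx n >= 2); it only serves to make termination evident.\<close>
function A105774 :: "nat \<Rightarrow> int" where
  "A105774 n = (if n < 2 then int n
     else if 0 < fib (fib_idx n)
       then int (fib (Suc (fib_idx n))) - A105774 (n - fib (fib_idx n))
     else 0)"
  by pat_completeness auto
termination
  by (relation "measure id") auto

definition w :: "nat \<Rightarrow> nat" where
  "w n = (LEAST m. A105774 m \<ge> int n)"

end

theory Submission
  imports Defs
begin

lemma fib_ge: "n \<le> fib (Suc n)"
proof (induction n rule: fib.induct)
  case 1 then show ?case by simp
next
  case 2 then show ?case by simp
next
  case (3 n)
  have "fib (Suc (Suc (Suc n))) = fib (Suc (Suc n)) + fib (Suc n)" by simp
  moreover have "fib (Suc n) \<ge> 1" using fib_neq_0_nat[of "Suc n"] by simp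
  ultimately show ?case using 3 by simp
qed

lemma fib_Suc_gt: "j \<ge> 2 \<Longrightarrow> fib j < fib (Suc j)"
proof -
  assume "j \<ge> 2"
  then obtain i where i: "j = Suc (Suc i)" by (metis add_2_eq_Suc le_Suc_ex)
  have "fib (Suc i) > 0" using fib_neq_0_nat by simp
  then show ?thesis using i by simp
qed

lemma fib_idx_unique:
  assumes "2 \<le> j" "fib j < n" "n \<le> fib (Suc j)"
  shows "fib_idx n = j"
  unfolding fib_idx_def
proof (rule the_equality)
  show "2 \<le> j \<and> fib j < n \<and> n \<le> fib (Suc j)" using assms by simp
next
  fix i assume h: "2 \<le> i \<and> fib i < n \<and> n \<le> fib (Suc i)"
  show "i = j"
  proof (rule ccontr)
    assume "i \<noteq> j"
    then have "Suc i \<le> j \<or> Suc j \<le> i" by linarith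
    then show False
    proof
      assume "Suc i \<le> j" then have "fib (Suc i) \<le> fib j" by (rule fib_mono)
      then show False using h assms by linarith
    next
      assume "Suc j \<le> i" then have "fib (Suc j) \<le> fib i" by (rule fib_mono)
      then show False using h assms by linarith
    qed
  qed
qed

lemma fib_idx_props:
  assumes "n \<ge> 2"
  shows "2 \<le> fib_idx n \<and> fib (fib_idx n) < n \<and> n \<le> fib (Suc (fib_idx n))"
proof -
  define j where "j = (LEAST j. n \<le> fib (Suc j))"
  have ex: "n \<le> fib (Suc n)" by (rule fib_ge)
  have j1: "n \<le> fib (Suc j)" unfolding j_def by (rule LeastI[of _ n], rule ex)
  have j0: "j \<noteq> 0" using j1 assms by (cases j) auto
  have j1': "j \<noteq> 1" using j1 assms by (auto simp: numeral_2_eq_2)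
  have j2: "2 \<le> j" using j0 j1' by linarith
  have "\<not> n \<le> fib (Suc (j - 1))"
    unfolding j_def by (rule not_less_Least) (use j0 in \<open>simp add: j_def\<close>)
  then have "fib j < n" using j0 by (simp)
  then have "fib_idx n = j" using fib_idx_unique j1 j2 by blast
  then show ?thesis using j1 j2 \<open>fib j < n\<close> by simp
qed

declare A105774.simps[simp del]

lemma a_small: "n < 2 \<Longrightarrow> A105774 n = int n"
  by (subst A105774.simps) simp

lemma a_rec:
  assumes "n \<ge> 2"
  shows "A105774 n = int (fib (Suc (fib_idx n))) - A105774 (n - fib (fib_idx n))"
proof -
  have "0 < fib (fib_idx n)" using fib_idx_props[OF assms] fib_neq_0_nat by simp
  then show ?thesis using assms by (subst A105774.simps) simp
qed

lemma a_bounds: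
  "r \<ge> 2 \<Longrightarrow> int (fib (fib_idx r)) \<le> A105774 r \<and> A105774 r \<le> int (fib (Suc (fib_idx r))) - 1"
proof (induction r rule: less_induct)
  case (less r)
  define j where "j = fib_idx r"
  have P: "2 \<le> j" "fib j < r" "r \<le> fib (Suc j)" using fib_idx_props[OF less.prems] j_def by auto
  define s where "s = r - fib j"
  have s1: "1 \<le> s" using P s_def by simp
  obtain i where i: "j = Suc (Suc i)" using P(1) by (metis add_2_eq_Suc le_Suc_ex)
  have fS: "fib (Suc j) = fib j + fib (Suc i)" using i by simp
  have s2: "s \<le> fib (Suc i)" using P fS s_def by simp
  have fpos: "fib j > 0" using P fib_neq_0_nat by simp
  have slt: "s < r" using s_def fpos P by simp
  have up: "A105774 s \<le> int (fib (Suc i))" "A105774 s \<ge> 1"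
  proof -
    have "A105774 s \<le> int (fib (Suc i)) \<and> A105774 s \<ge> 1"
    proof (cases "s = 1")
      case True
      then show ?thesis using fib_neq_0_nat[of "Suc i"] a_small[of 1] by simp
    next
      case False
      then have s2': "s \<ge> 2" using s1 by simp
      note IH = less.IH[OF slt s2']
      have Q: "2 \<le> fib_idx s" "fib (fib_idx s) < s" using fib_idx_props[OF s2'] by auto
      have "fib_idx s < Suc i"
      proof (rule ccontr)
        assume "\<not> fib_idx s < Suc i"
        then have "fib (Suc i) \<le> fib (fib_idx s)" using fib_mono by simp
        then show False using Q s2 by linarith
      qed
      then have "fib (Suc (fib_idx s)) \<le> fib (Suc i)" using fib_mono by simp
      moreover have "fib (fib_idx s) \<ge> 1" using Q fib_neq_0_nat by (simp add: Suc_le_eq)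
      ultimately show ?thesis using IH by linarith
    qed
    then show "A105774 s \<le> int (fib (Suc i))" "A105774 s \<ge> 1" by auto
  qed
  have "A105774 r = int (fib (Suc j)) - A105774 s"
    using a_rec[OF less.prems] j_def s_def by simp
  then show ?case using up fS j_def by simp
qed

theorem proposition20:
  fixes n k :: nat
  assumes "n \<ge> 2" and "fib k \<le> n" and "n < fib (Suc k)"
  shows "w n = fib k + 1"
proof -
  have k3: "k \<ge> 3"
  proof (rule ccontr)
    assume "\<not> k \<ge> 3"
    then have "k = 0 \<or> k = 1 \<or> k = 2" by linarith
    then show False using assms by (auto simp: numeral_2_eq_2 numeral_3_eq_3)
  qed
  have fk2: "fib k \<ge> 2"
  proof -
    have "fib 3 \<le> fib k" using k3 fib_mono by blast
    moreover have "fib 3 = 2" by (simp add: numeral_3_eq_3 numeral_2_eq_2)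
    ultimately show ?thesis by simp
  qed
  have kgt: "fib k < fib (Suc k)" using fib_Suc_gt k3 by simp
  have idx: "fib_idx (fib k + 1) = k"
    by (rule fib_idx_unique) (use k3 kgt in auto)
  have a1: "A105774 (fib k + 1) = int (fib (Suc k)) - 1"
    using a_rec[of "fib k + 1"] fk2 idx a_small[of 1] by simp
  have ge: "A105774 (fib k + 1) \<ge> int n" using a1 assms by simp
  have lt: "A105774 m < int n" if "m < fib k + 1" for m
  proof (cases "m \<ge> 2")
    case True
    have P: "fib (fib_idx m) < m" using fib_idx_props[OF True] by auto
    have "fib_idx m < k"
    proof (rule ccontr)
      assume "\<not> fib_idx m < k"
      then have "fib k \<le> fib (fib_idx m)" using fib_mono by simp
      then show False using P that by linarith
    qed
    then have "fib (Suc (fib_idx m)) \<le> fib k" using fib_mono by simp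
    then show ?thesis using a_bounds[OF True] assms by linarith
  next
    case False
    then have "m = 0 \<or> m = 1" by linarith
    then show ?thesis using assms a_small by auto
  qed
  show ?thesis unfolding w_def
    by (rule Least_equality) (use ge lt in \<open>auto simp: not_le[symmetric]\<close>)
qed

end
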